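(* Let $\Omega\subset\mathbb{R}^3$ be the unit ball. For $r_1\in(0,1)$, $\sigma_1>0$ let $R_{\sigma_1,r_1}:H^{-1/2}(\partial\Omega)\to H^{1/2}(\partial\Omega)$ be the Neumann-to-Dirichlet map of the three-dimensional core-shell problem and $R$ the Neumann-to-Dirichlet map of the homogeneous ball problem (defined in the context). Then: (1) for any fixed $r_1\in(0,1)$, $\|R_{\sigma_1,r_1}-R\|\to0$ as $\sigma_1\to1$; (2) for any fixed $\sigma_1>0$, $\|R_{\sigma_1,r_1}-R\|\to0$ as $r_1\to0$. Here $\|\cdot\|$ is the operator norm from $H^{-1/2}(\partial\Omega)$ to $H^{1/2}(\partial\Omega)$.
   Context: Spherical coordinates $(r,\theta,\phi)$, $\mu=\cos\theta$. $I_{n+1/2},K_{n+1/2}$ are modified Bessel functions of first and second kind of order $n+\tfrac12$; $P_n^{|m|}$ are associated Legendre functions; $g_{nm}=(g,P_n^{|m|}(\mu)e^{im\phi})$ for $n\ge0$, $|m|\le n$. Let $\Delta$ denote the Laplacian in $\mathbb{R}^3$. Core-shell problem: given $r_1,\sigma_1$ and $g\in H^{-1/2}(\partial\Omega)$, $\psi$ solves $\Delta\psi-\sigma_1^{-1}\psi=0$ in $r<r_1$, $\Delta\psi-\psi=0$ in $r_1<r<1$, $\psi|_{r=r_1}^+=\psi|_{r=r_1}^-$, $\partial_r\psi|_{r=r_1}^+=\sigma_1\partial_r\psi|_{r=r_1}^-$ ($\pm$ = limits from outside/inside the sphere $r=r_1$), $\partial_r\psi|_{r=1}=g$, $\psi$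 bounded at $r=0$ and as $\mu\to\pm1$; $R_{\sigma_1,r_1}(g)=\psi|_{r=1}$. Explicitly $R_{\sigma_1,r_1}(g)=\sum_{n\ge0}\sum_{m=-n}^n\frac{\rho_nK_{n+1/2}(1)-I_{n+1/2}(1)}{\rho_nK_{n+1/2}'(1)-I_{n+1/2}'(1)}g_{nm}P_n^{|m|}(\mu)e^{im\phi}$, with $\rho_n=\frac{\sigma_1I_{n+1/2}'(r_1/\sqrt{\sigma_1})I_{n+1/2}(r_1)-I_{n+1/2}(r_1/\sqrt{\sigma_1})I_{n+1/2}'(r_1)}{\sigma_1I_{n+1/2}'(r_1/\sqrt{\sigma_1})K_{n+1/2}(r_1)-I_{n+1/2}(r_1/\sqrt{\sigma_1})K_{n+1/2}'(r_1)}$. Homogeneous problem: $\Delta\Psi-\Psi=0$ in $r<1$, $\partial_r\Psi|_{r=1}=g$, $\Psi$ bounded at $0$; $R(g)=\Psi|_{r=1}=\sum_{n\ge0}\sum_{m=-n}^n\frac{I_{n+1/2}(1)}{I_{n+1/2}'(1)}g_{nm}P_n^{|m|}(\mu)e^{im\phi}$. *)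

theory Defs
  imports "HOL-Analysis.Analysis"
begin

definition besselI :: "real \<Rightarrow> real \<Rightarrow> real" where
  "besselI \<nu> x = (\<Sum>k. (x / 2) powr (2 * real k + \<nu>) / (fact k * Gamma (real k + \<nu> + 1)))"

text \<open>K_nu(x) = (pi/2) (I_{-nu}(x) - I_nu(x)) / sin(nu pi), valid for non-integer nu
  (in particular nu = n + 1/2).\<close>
definition besselK :: "real \<Rightarrow> real \<Rightarrow> real" where
  "besselK \<nu> x = pi / 2 * (besselI (- \<nu>) x - besselI \<nu> x) / sin (\<nu> * pi)"

abbreviation In :: "nat \<Rightarrow> real \<Rightarrow> real" where "In n \<equiv> besselI (real n + 1/2)"
abbreviation Kn :: "nat \<Rightarrow> real \<Rightarrow> real" where "Kn n \<equiv> besselK (real n + 1/2)"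
abbreviation dIn :: "nat \<Rightarrow> real \<Rightarrow> real" where "dIn n x \<equiv> deriv (In n) x"
abbreviation dKn :: "nat \<Rightarrow> real \<Rightarrow> real" where "dKn n x \<equiv> deriv (Kn n) x"

section \<open>Multipliers of the Neumann-to-Dirichlet maps on spherical harmonics of degree n\<close>

definition rho :: "real \<Rightarrow> real \<Rightarrow> nat \<Rightarrow> real" where
  "rho \<sigma>1 r1 n =
     (\<sigma>1 * dIn n (r1 / sqrt \<sigma>1) * In n r1 - In n (r1 / sqrt \<sigma>1) * dIn n r1) /
     (\<sigma>1 * dIn n (r1 / sqrt \<sigma>1) * Kn n r1 - In n (r1 / sqrt \<sigma>1) * dKn n r1)"

definition mult_cs :: "real \<Rightarrow> real \<Rightarrow> nat \<Rightarrow> real" where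
  "mult_cs \<sigma>1 r1 n = (rho \<sigma>1 r1 n * Kn n 1 - In n 1) / (rho \<sigma>1 r1 n * dKn n 1 - dIn n 1)"

definition mult_hom :: "nat \<Rightarrow> real" where
  "mult_hom n = In n 1 / dIn n 1"

text \<open>A function on the sphere is represented by its coefficients c n m (n >= 0, |m| <= n)
  with respect to the (orthonormalised) basis P_n^|m|(mu) e^(i m phi).\<close>
definition sh_idx :: "(nat \<times> int) set" where
  "sh_idx = {(n, m). \<bar>m\<bar> \<le> int n}"

definition sob_weight :: "real \<Rightarrow> nat \<Rightarrow> real" where
  "sob_weight s n = (1 + real n * (real n + 1)) powr s"

definition inH :: "real \<Rightarrow> (nat \<Rightarrow> int \<Rightarrow> complex) \<Rightarrow> bool" where
  "inH s c \<longleftrightarrow> (\<lambda>(n, m). sob_weight s n * (cmod (c n m))\<^sup>2) summable_on sh_idx"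

definition Hnorm :: "real \<Rightarrow> (nat \<Rightarrow> int \<Rightarrow> complex) \<Rightarrow> real" where
  "Hnorm s c = sqrt (\<Sum>\<^sub>\<infinity>(n, m)\<in>sh_idx. sob_weight s n * (cmod (c n m))\<^sup>2)"

definition mult_op :: "(nat \<Rightarrow> real) \<Rightarrow> (nat \<Rightarrow> int \<Rightarrow> complex) \<Rightarrow> (nat \<Rightarrow> int \<Rightarrow> complex)" where
  "mult_op lam c = (\<lambda>n m. complex_of_real (lam n) * c n m)"

definition bounded_op :: "(nat \<Rightarrow> real) \<Rightarrow> bool" where
  "bounded_op lam \<longleftrightarrow> (\<exists>C. \<forall>c. inH (-1/2) c \<longrightarrow>
      inH (1/2) (mult_op lam c) \<and> Hnorm (1/2) (mult_op lam c) \<le> C * Hnorm (-1/2) c)"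

definition op_norm :: "(nat \<Rightarrow> real) \<Rightarrow> real" where
  "op_norm lam = (SUP c\<in>{c. inH (-1/2) c \<and> Hnorm (-1/2) c \<noteq> 0}.
                    Hnorm (1/2) (mult_op lam c) / Hnorm (-1/2) c)"

definition diff_mult :: "real \<Rightarrow> real \<Rightarrow> nat \<Rightarrow> real" where
  "diff_mult \<sigma>1 r1 n = mult_cs \<sigma>1 r1 n - mult_hom n"

end

theory Submission
  imports Defs
begin


definition Sc :: "real \<Rightarrow> nat \<Rightarrow> real" where
  "Sc \<mu> k = rGamma (real k + \<mu> + 1) / fact k"

definition S :: "real \<Rightarrow> real \<Rightarrow> real" where
  "S \<mu> y = (\<Sum>k. Sc \<mu> k * y ^ k)"

lemma rGamma_step: "rGamma (z::real) = z * rGamma (z + 1)"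
  using rGamma_plus1[of z] by simp

lemma rGamma_bound:
  assumes "real K0 + \<mu> \<ge> 0" "k \<ge> K0"
  shows "\<bar>rGamma (real k + \<mu> + 1)\<bar> \<le> \<bar>rGamma (real K0 + \<mu> + 1)\<bar>"
  using assms(2)
proof (induction k rule: dec_induct)
  case base then show ?case by simp
next
  case (step k)
  have z: "real k + \<mu> + 1 \<ge> 1" using step assms(1) by simp
  have "rGamma (real k + \<mu> + 1) = (real k + \<mu> + 1) * rGamma (real (Suc k) + \<mu> + 1)"
    using rGamma_step[of "real k + \<mu> + 1"] by (simp add: algebra_simps)
  hence "\<bar>rGamma (real k + \<mu> + 1)\<bar> = (real k + \<mu> + 1) * \<bar>rGamma (real (Suc k) + \<mu> + 1)\<bar>"
    using z by (simp add: abs_mult)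
  hence "\<bar>rGamma (real (Suc k) + \<mu> + 1)\<bar> \<le> \<bar>rGamma (real k + \<mu> + 1)\<bar>"
    using z mult_right_mono[of 1 "real k + \<mu> + 1" "\<bar>rGamma (real (Suc k) + \<mu> + 1)\<bar>"] by simp
  then show ?case using step by linarith
qed

lemma S_summable: "summable (\<lambda>k. Sc \<mu> k * y ^ k)"
proof -
  define K0 where "K0 = nat \<lceil>\<bar>\<mu>\<bar>\<rceil>"
  have K0: "real K0 + \<mu> \<ge> 0" unfolding K0_def by linarith
  define C where "C = \<bar>rGamma (real K0 + \<mu> + 1)\<bar>"
  have "summable (\<lambda>k. C * (inverse (fact k) * \<bar>y\<bar> ^ k))"
    by (intro summable_mult summable_exp)
  moreover have "norm (Sc \<mu> k * y ^ k) \<le> C * (inverse (fact k) * \<bar>y\<bar> ^ k)" if "k \<ge> K0" for k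
  proof -
    have "norm (Sc \<mu> k * y ^ k) = \<bar>rGamma (real k + \<mu> + 1)\<bar> * (inverse (fact k) * \<bar>y\<bar> ^ k)"
      by (simp add: Sc_def abs_mult power_abs divide_inverse)
    also have "\<dots> \<le> C * (inverse (fact k) * \<bar>y\<bar> ^ k)"
      unfolding C_def by (intro mult_right_mono rGamma_bound K0 that) auto
    finally show ?thesis .
  qed
  ultimately show ?thesis by (rule summable_comparison_test')
qed

lemma S_deriv: "(S \<mu> has_real_derivative S (\<mu> + 1) y) (at y)"
proof -
  have "diffs (Sc \<mu>) = Sc (\<mu> + 1)"
  proof
    fix n
    have "diffs (Sc \<mu>) n = real (Suc n) * (rGamma (real (Suc n) + \<mu> + 1) / fact (Suc n))"
      by (simp add: diffs_def Sc_def)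
    also have "\<dots> = rGamma (real n + (\<mu> + 1) + 1) / fact n"
      by (simp add: fact_Suc field_simps del: of_nat_Suc) (simp add: algebra_simps)
    finally show "diffs (Sc \<mu>) n = Sc (\<mu> + 1) n" by (simp add: Sc_def)
  qed
  moreover have "((\<lambda>x. \<Sum>n. Sc \<mu> n * x^n) has_field_derivative (\<Sum>n. diffs (Sc \<mu>) n * y^n)) (at y)"
    by (rule termdiffs_strong_converges_everywhere) (rule S_summable)
  ultimately show ?thesis unfolding S_def by simp
qed

lemma S_rec: "S (\<mu> - 1) y = \<mu> * S \<mu> y + y * S (\<mu> + 1) y"
proof -
  have "(\<lambda>k. Sc (\<mu> - 1) k * y ^ k) = (\<lambda>k. \<mu> * (Sc \<mu> k * y ^ k) + real k * (Sc \<mu> k * y ^ k))"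
  proof
    fix k
    have "rGamma (real k + (\<mu> - 1) + 1) = (real k + \<mu>) * rGamma (real k + \<mu> + 1)"
      using rGamma_step[of "real k + \<mu>"] by simp
    then show "Sc (\<mu> - 1) k * y ^ k = \<mu> * (Sc \<mu> k * y ^ k) + real k * (Sc \<mu> k * y ^ k)"
      by (simp add: Sc_def algebra_simps add_divide_distrib)
  qed
  moreover have "(\<lambda>k. real k * (Sc \<mu> k * y ^ k)) = (\<lambda>k. if k = 0 then 0 else y * (Sc (\<mu>+1) (k - 1) * y ^ (k - 1)))"
  proof
    fix k show "real k * (Sc \<mu> k * y ^ k) = (if k = 0 then 0 else y * (Sc (\<mu>+1) (k - 1) * y ^ (k - 1)))"
    proof (cases k)
      case (Suc j)
      have "real (Suc j) * (rGamma (real (Suc j) + \<mu> + 1) / fact (Suc j)) = rGamma (real j + (\<mu> + 1) + 1) / fact j"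
        by (simp add: fact_Suc del: of_nat_Suc) (simp add: algebra_simps)
      then show ?thesis using Suc by (simp add: Sc_def)
    qed simp
  qed
  moreover have "(\<lambda>k. if k = 0 then 0 else y * (Sc (\<mu>+1) (k - 1) * y ^ (k - 1))) sums (y * S (\<mu>+1) y)"
  proof -
    have "(\<lambda>j. y * (Sc (\<mu>+1) j * y ^ j)) sums (y * S (\<mu>+1) y)"
      unfolding S_def by (intro sums_mult summable_sums S_summable)
    hence "(\<lambda>k. (\<lambda>k. if k = 0 then 0 else y * (Sc (\<mu>+1) (k - 1) * y ^ (k - 1))) (Suc k)) sums (y * S (\<mu>+1) y)"
      by simp
    thus ?thesis by (subst (asm) sums_Suc_iff) simp
  qed
  ultimately have "(\<lambda>k. Sc (\<mu> - 1) k * y ^ k) sums (\<mu> * S \<mu> y + y * S (\<mu> + 1) y)"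
  proof -
    assume e1: "(\<lambda>k. Sc (\<mu> - 1) k * y ^ k) = (\<lambda>k. \<mu> * (Sc \<mu> k * y ^ k) + real k * (Sc \<mu> k * y ^ k))"
      and e2: "(\<lambda>k. real k * (Sc \<mu> k * y ^ k)) = (\<lambda>k. if k = 0 then 0 else y * (Sc (\<mu>+1) (k - 1) * y ^ (k - 1)))"
      and e3: "(\<lambda>k. if k = 0 then 0 else y * (Sc (\<mu>+1) (k - 1) * y ^ (k - 1))) sums (y * S (\<mu>+1) y)"
    have "(\<lambda>k. \<mu> * (Sc \<mu> k * y ^ k)) sums (\<mu> * S \<mu> y)"
      unfolding S_def by (intro sums_mult summable_sums S_summable)
    moreover have "(\<lambda>k. real k * (Sc \<mu> k * y ^ k)) sums (y * S (\<mu>+1) y)"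
      using e2 e3 by simp
    ultimately have "(\<lambda>k. \<mu> * (Sc \<mu> k * y ^ k) + real k * (Sc \<mu> k * y ^ k)) sums (\<mu> * S \<mu> y + y * S (\<mu> + 1) y)"
      by (rule sums_add)
    thus ?thesis using e1 by simp
  qed
  thus ?thesis unfolding S_def[of "\<mu>-1"] by (simp add: sums_iff)
qed


lemma powr_m1: "(x::real) > 0 \<Longrightarrow> (x/2) powr (\<mu> - 1) = (x/2) powr \<mu> * (2/x)"
  by (simp add: powr_diff)
lemma powr_p1: "(x::real) > 0 \<Longrightarrow> (x/2) powr (\<mu> + 1) = (x/2) powr \<mu> * (x/2)"
  by (simp add: powr_add)

lemma I_S: assumes "x > 0" shows "besselI \<mu> x = (x/2) powr \<mu> * S \<mu> (x\<^sup>2/4)"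
proof -
  have "(x/2) powr (2 * real k + \<mu>) / (fact k * Gamma (real k + \<mu> + 1)) = (x/2) powr \<mu> * (Sc \<mu> k * (x\<^sup>2/4) ^ k)" for k
  proof -
    have e1: "(x/2) powr (2 * real k + \<mu>) = (x/2) powr (2 * real k) * (x/2) powr \<mu>"
      by (simp add: powr_add)
    have e2: "(x/2) powr (2 * real k) = (x/2) ^ (2*k)"
      using powr_realpow[of "x/2" "2*k"] assms by simp
    have e3: "(x/2) ^ (2*k) = (x\<^sup>2/4)^k"
      by (simp add: power_mult power_divide)
    from e1 e2 e3 have e: "(x/2) powr (2 * real k + \<mu>) = (x\<^sup>2/4)^k * (x/2) powr \<mu>" by simp
    show ?thesis
    proof (cases "Gamma (real k + \<mu> + 1) = 0")
      case True then show ?thesis by (simp add: Sc_def rGamma_inverse_Gamma)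
    next
      case False then show ?thesis by (subst e) (simp add: Sc_def rGamma_inverse_Gamma field_simps)
    qed
  qed
  hence "besselI \<mu> x = (\<Sum>k. (x/2) powr \<mu> * (Sc \<mu> k * (x\<^sup>2/4) ^ k))"
    unfolding besselI_def by simp
  also have "\<dots> = (x/2) powr \<mu> * S \<mu> (x\<^sup>2/4)"
    unfolding S_def by (rule suminf_mult[OF S_summable])
  finally show ?thesis .
qed

lemma I_deriv: assumes "x > 0"
  shows "(besselI \<mu> has_real_derivative (\<mu>/x * besselI \<mu> x + besselI (\<mu>+1) x)) (at x)"
proof -
  have d1: "((\<lambda>t. (t/2) powr \<mu>) has_real_derivative (\<mu> * (x/2) powr (\<mu> - 1) * (1/2))) (at x)"
  proof -
    have "((\<lambda>t. t/2) has_real_derivative 1/2) (at x)"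
      by (auto intro!: derivative_eq_intros)
    from DERIV_chain2[OF has_real_derivative_powr[of "x/2" \<mu>] this] assms show ?thesis
      by simp
  qed
  have d2: "((\<lambda>t. S \<mu> (t\<^sup>2/4)) has_real_derivative (S (\<mu>+1) (x\<^sup>2/4) * (x/2))) (at x)"
  proof -
    have "((\<lambda>t. t\<^sup>2/4) has_real_derivative (2*x/4)) (at x)"
      by (auto intro!: derivative_eq_intros)
    from DERIV_chain2[OF S_deriv this] show ?thesis by simp
  qed
  have d: "((\<lambda>t. (t/2) powr \<mu> * S \<mu> (t\<^sup>2/4)) has_real_derivative
      (\<mu> * (x/2) powr (\<mu> - 1) * (1/2)) * S \<mu> (x\<^sup>2/4) + (x/2) powr \<mu> * (S (\<mu>+1) (x\<^sup>2/4) * (x/2))) (at x)"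
    using DERIV_mult[OF d1 d2] by (simp add: mult.commute)
  have "(\<mu> * (x/2) powr (\<mu> - 1) * (1/2)) * S \<mu> (x\<^sup>2/4) + (x/2) powr \<mu> * (S (\<mu>+1) (x\<^sup>2/4) * (x/2))
      = \<mu>/x * besselI \<mu> x + besselI (\<mu>+1) x"
    using assms by (simp add: I_S powr_m1 powr_p1) (simp add: field_simps)
  with d have d': "((\<lambda>t. (t/2) powr \<mu> * S \<mu> (t\<^sup>2/4)) has_real_derivative (\<mu>/x * besselI \<mu> x + besselI (\<mu>+1) x)) (at x)"
    by simp
  show ?thesis
    by (rule has_field_derivative_transform_within_open[OF d', of "{0<..}"]) (use assms in \<open>auto simp: I_S\<close>)
qed

lemma I_rec: assumes "x > 0"
  shows "besselI (\<mu> - 1) x = 2*\<mu>/x * besselI \<mu> x + besselI (\<mu>+1) x"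
  using assms by (simp add: I_S S_rec powr_m1 powr_p1) (simp add: field_simps power2_eq_square)


lemma sin_shift_m1: "sin ((\<nu> - 1) * pi) = - sin (\<nu> * pi)"
proof -
  have "(\<nu> - 1) * pi = \<nu> * pi - pi" by (simp add: algebra_simps)
  thus ?thesis by (simp add: sin_diff)
qed

lemma sin_shift_p1: "sin ((\<nu> + 1) * pi) = - sin (\<nu> * pi)"
proof -
  have "(\<nu> + 1) * pi = \<nu> * pi + pi" by (simp add: algebra_simps)
  thus ?thesis by (simp add: sin_add)
qed

lemma K_deriv: assumes "x > 0"
  shows "(besselK \<nu> has_real_derivative (- besselK (\<nu> - 1) x - \<nu>/x * besselK \<nu> x)) (at x)"
proof -
  have d: "(besselK \<nu> has_real_derivative
     pi / 2 * (((-\<nu>)/x * besselI (-\<nu>) x + besselI (-\<nu>+1) x) - (\<nu>/x * besselI \<nu> x + besselI (\<nu>+1) x)) / sin (\<nu> * pi)) (at x)"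
    unfolding besselK_def[abs_def]
    by (intro DERIV_cdivide DERIV_cmult DERIV_diff I_deriv assms)
  have r: "besselI (\<nu> - 1) x = 2*\<nu>/x * besselI \<nu> x + besselI (\<nu>+1) x"
    by (rule I_rec[OF assms])
  have e: "- (\<nu> - 1) = -\<nu> + 1" by simp
  have "pi / 2 * (((-\<nu>)/x * besselI (-\<nu>) x + besselI (-\<nu>+1) x) - (\<nu>/x * besselI \<nu> x + besselI (\<nu>+1) x)) / sin (\<nu> * pi)
      = - besselK (\<nu> - 1) x - \<nu>/x * besselK \<nu> x"
    unfolding besselK_def sin_shift_m1 e r using assms
    by (cases "sin (\<nu> * pi) = 0") (simp_all add: field_simps)
  with d show ?thesis by simp
qed

lemma K_rec: assumes "x > 0"
  shows "besselK (\<nu> + 1) x = besselK (\<nu> - 1) x + 2*\<nu>/x * besselK \<nu> x"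
proof -
  have r1: "besselI (\<nu> - 1) x = 2*\<nu>/x * besselI \<nu> x + besselI (\<nu>+1) x"
    by (rule I_rec[OF assms])
  have r2: "besselI (-\<nu> - 1) x = 2*(-\<nu>)/x * besselI (-\<nu>) x + besselI (-\<nu>+1) x"
    by (rule I_rec[OF assms])
  have e1: "- (\<nu> - 1) = -\<nu> + 1" and e2: "- (\<nu> + 1) = -\<nu> - 1" by simp_all
  show ?thesis
    unfolding besselK_def sin_shift_m1 sin_shift_p1 e1 e2 r1 r2 using assms
    by (cases "sin (\<nu> * pi) = 0") (simp_all add: field_simps)
qed

lemma Sc_pos: "\<mu> \<ge> 0 \<Longrightarrow> Sc \<mu> k > 0"
  unfolding Sc_def rGamma_inverse_Gamma by simp

lemma S_at0: "S \<mu> 0 = rGamma (\<mu> + 1)"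
  unfolding S_def using powser_zero[of "Sc \<mu>"] by (simp add: Sc_def)

lemma S_mono: assumes "\<mu> \<ge> 0" "0 \<le> y" "y \<le> Y" shows "S \<mu> y \<le> S \<mu> Y"
  unfolding S_def
proof (rule suminf_le[OF _ S_summable S_summable])
  fix k show "Sc \<mu> k * y ^ k \<le> Sc \<mu> k * Y ^ k"
    using Sc_pos[OF assms(1), of k] assms(2,3)
    by (intro mult_left_mono power_mono) auto
qed

lemma S_ge0: assumes "\<mu> \<ge> 0" "0 \<le> y" shows "rGamma (\<mu> + 1) \<le> S \<mu> y"
  using S_mono[OF assms(1) order_refl assms(2)] by (simp add: S_at0)

lemma rGamma_pos: "z > 0 \<Longrightarrow> rGamma (z::real) > 0"
  unfolding rGamma_inverse_Gamma by simp

lemma S_pos: assumes "\<mu> \<ge> 0" "0 \<le> y" shows "S \<mu> y > 0"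
  using S_ge0[OF assms] rGamma_pos[of "\<mu>+1"] assms by simp

lemma S_le: assumes "\<mu> \<ge> 0" "0 \<le> y" "y \<le> 1/4" shows "S \<mu> y \<le> 4/3 * rGamma (\<mu> + 1)"
proof -
  have "S \<mu> y \<le> (\<Sum>k. rGamma (\<mu> + 1) * y ^ k)"
    unfolding S_def
  proof (rule suminf_le[OF _ S_summable])
    fix k
    have "\<bar>rGamma (real k + \<mu> + 1)\<bar> \<le> \<bar>rGamma (real 0 + \<mu> + 1)\<bar>"
      by (rule rGamma_bound) (use assms in auto)
    hence "rGamma (real k + \<mu> + 1) \<le> rGamma (\<mu> + 1)"
      using rGamma_pos[of "real k + \<mu> + 1"] rGamma_pos[of "\<mu> + 1"] assms by simp
    moreover have "rGamma (real k + \<mu> + 1) / fact k \<le> rGamma (real k + \<mu> + 1)"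
      using rGamma_pos[of "real k + \<mu> + 1"] assms
      by (simp add: divide_le_eq fact_ge_1 mult_le_cancel_left1)
    ultimately show "Sc \<mu> k * y ^ k \<le> rGamma (\<mu> + 1) * y ^ k"
      unfolding Sc_def using assms by (intro mult_right_mono) auto
  next
    show "summable (\<lambda>k. rGamma (\<mu> + 1) * y ^ k)"
      using assms by (intro summable_mult summable_geometric) auto
  qed
  also have "\<dots> = rGamma (\<mu> + 1) * (1 / (1 - y))"
    using assms by (subst suminf_mult[OF summable_geometric]) (auto simp: suminf_geometric)
  also have "\<dots> \<le> rGamma (\<mu> + 1) * (4/3)"
    using assms rGamma_pos[of "\<mu> + 1"] by (intro mult_left_mono) (auto simp: divide_simps)
  finally show ?thesis by simp
qed

lemma S_succ_le: assumes "\<mu> \<ge> 0" "0 \<le> y" shows "S (\<mu> + 1) y \<le> S \<mu> y"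
  unfolding S_def
proof (rule suminf_le[OF _ S_summable S_summable])
  fix k
  have z: "real k + \<mu> + 1 \<ge> 1" using assms by simp
  have "rGamma (real k + \<mu> + 1) = (real k + \<mu> + 1) * rGamma (real k + (\<mu> + 1) + 1)"
    using rGamma_step[of "real k + \<mu> + 1"] by (simp add: algebra_simps)
  hence "rGamma (real k + (\<mu> + 1) + 1) \<le> rGamma (real k + \<mu> + 1)"
    using z rGamma_pos[of "real k + (\<mu> + 1) + 1"]
      mult_right_mono[of 1 "real k + \<mu> + 1" "rGamma (real k + (\<mu> + 1) + 1)"] by simp
  thus "Sc (\<mu> + 1) k * y ^ k \<le> Sc \<mu> k * y ^ k"
    unfolding Sc_def using assms by (intro mult_right_mono divide_right_mono) auto
qed

lemma rGamma_succ_le: assumes "(\<mu>::real) \<ge> 0" shows "rGamma (\<mu> + 1 + 1) \<le> rGamma (\<mu> + 1)"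
  using S_succ_le[OF assms, of 0] by (simp add: S_at0)


lemma K_half_pos: assumes "0 < x" "x \<le> 1" shows "besselK (1/2) x > 0"
proof -
  define y where "y = x\<^sup>2/4"
  have y: "y > 0" unfolding y_def using assms by simp
  have t: "Sc (-1/2) k * y ^ k - x/2 * (Sc (1/2) k * y ^ k) = Sc (1/2) k * (real k + 1/2 - x/2) * y ^ k" for k
  proof -
    have "rGamma (real k + 1/2) = (real k + 1/2) * rGamma (real k + 1/2 + 1)"
      by (rule rGamma_step)
    moreover have "real k + -1/2 + 1 = real k + 1/2" "real k + 1/2 + 1 = real k + 1/2 + 1" by simp_all
    ultimately show ?thesis unfolding Sc_def by (simp add: algebra_simps diff_divide_distrib add_divide_distrib)
  qed
  have s: "(\<lambda>k. Sc (1/2) k * (real k + 1/2 - x/2) * y ^ k) sums (S (-1/2) y - x/2 * S (1/2) y)"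
  proof -
    have "(\<lambda>k. Sc (-1/2) k * y ^ k - x/2 * (Sc (1/2) k * y ^ k)) sums (S (-1/2) y - x/2 * S (1/2) y)"
      unfolding S_def by (intro sums_diff sums_mult summable_sums S_summable)
    thus ?thesis unfolding t .
  qed
  have pos: "S (-1/2) y - x/2 * S (1/2) y > 0"
  proof -
    have "0 < suminf (\<lambda>k. Sc (1/2) k * (real k + 1/2 - x/2) * y ^ k)"
    proof (rule suminf_pos2[of _ 1])
      show "summable (\<lambda>k. Sc (1/2) k * (real k + 1/2 - x/2) * y ^ k)" using s by (rule sums_summable)
      show "0 \<le> Sc (1/2) k * (real k + 1/2 - x/2) * y ^ k" for k
        using Sc_pos[of "1/2" k] assms y by (intro mult_nonneg_nonneg) auto
      show "0 < Sc (1/2) 1 * (real 1 + 1/2 - x/2) * y ^ 1"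
        using Sc_pos[of "1/2" 1] assms y by (intro mult_pos_pos) auto
    qed
    thus ?thesis using s by (simp add: sums_iff)
  qed
  have eqK: "besselK (1/2) x = pi/2 * ((x/2) powr (-1/2) * (S (-1/2) y - x/2 * S (1/2) y))"
  proof -
    have "besselI (1/2) x = (x/2) powr (-1/2) * (x/2) * S (1/2) y"
      using I_S[OF assms(1), of "1/2"] powr_p1[OF assms(1), of "-1/2"] unfolding y_def by simp
    moreover have "besselI (-1/2) x = (x/2) powr (-1/2) * S (-1/2) y"
      using I_S[OF assms(1), of "-1/2"] unfolding y_def by simp
    moreover have "sin (1/2 * pi) = 1" by simp
    ultimately show ?thesis unfolding besselK_def by (simp add: algebra_simps)
  qed
  have "0 < pi/2 * ((x/2) powr (-1/2) * (S (-1/2) y - x/2 * S (1/2) y))"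
    using pos assms by (intro mult_pos_pos) auto
  thus ?thesis using eqK by simp
qed

lemma Km_half: "besselK (-1/2) x = besselK (1/2) x"
  unfolding besselK_def by (simp add: algebra_simps)

lemma K_pos_ind: assumes "0 < x" "x \<le> 1"
  shows "0 < besselK (real n - 1/2) x \<and> besselK (real n - 1/2) x \<le> besselK (real n + 1/2) x"
proof (induction n)
  case 0 show ?case using K_half_pos[OF assms] Km_half[of x] by simp
next
  case (Suc n)
  have r: "besselK ((real n + 1/2) + 1) x = besselK ((real n + 1/2) - 1) x + 2*(real n + 1/2)/x * besselK (real n + 1/2) x"
    by (rule K_rec[OF assms(1)])
  have e1: "real (Suc n) + 1/2 = (real n + 1/2) + 1" and e2: "real n - 1/2 = (real n + 1/2) - 1"
    and e3: "real (Suc n) - 1/2 = real n + 1/2" by simp_all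
  have p: "0 < besselK (real n + 1/2) x" using Suc.IH by linarith
  have "1 \<le> 2*(real n + 1/2)/x" using assms by (simp add: field_simps)
  hence "besselK (real n + 1/2) x \<le> 2*(real n + 1/2)/x * besselK (real n + 1/2) x"
    using p mult_right_mono[of 1 "2*(real n + 1/2)/x" "besselK (real n + 1/2) x"] by simp
  moreover have "0 < besselK ((real n + 1/2) - 1) x" using Suc.IH unfolding e2 by (rule conjunct1)
  ultimately show ?case unfolding e1 e3 r using p by linarith
qed

lemma K_pos: "0 < x \<Longrightarrow> x \<le> 1 \<Longrightarrow> 0 < Kn n x"
proof -
  have e: "real (Suc n) - 1/2 = real n + 1/2" by simp
  assume "0 < x" "x \<le> 1"
  from K_pos_ind[OF this, of "Suc n"] show ?thesis unfolding e by linarith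
qed

lemma Km1_pos: "0 < x \<Longrightarrow> x \<le> 1 \<Longrightarrow> 0 < besselK (real n + 1/2 - 1) x"
  using K_pos_ind[of x n] by (simp add: algebra_simps)

lemma Km1_le: "0 < x \<Longrightarrow> x \<le> 1 \<Longrightarrow> besselK (real n + 1/2 - 1) x \<le> Kn n x"
  using K_pos_ind[of x n] by (simp add: algebra_simps)

lemma dK: "0 < x \<Longrightarrow> dKn n x = - besselK (real n + 1/2 - 1) x - (real n + 1/2)/x * Kn n x"
  by (rule DERIV_imp_deriv[OF K_deriv])

lemma negdK_ge: "0 < x \<Longrightarrow> x \<le> 1 \<Longrightarrow> (real n + 1/2)/x * Kn n x \<le> - dKn n x"
  using dK[of x n] Km1_pos[of x n] by simp

lemma negdK1_le: "- dKn n 1 \<le> (1 + (real n + 1/2)) * Kn n 1"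
  using dK[of 1 n] Km1_le[of 1 n] by (simp add: algebra_simps)

lemma K_decay: assumes "0 < r" "r \<le> 1" shows "Kn n 1 \<le> r powr (real n + 1/2) * Kn n r"
proof -
  define \<nu> where "\<nu> = real n + 1/2"
  have Kv: "Kn n = besselK \<nu>" unfolding \<nu>_def ..
  let ?g = "\<lambda>t. - (t powr \<nu> * besselK \<nu> t)"
  have "?g r \<le> ?g 1"
  proof (rule deriv_nonneg_imp_mono[of r 1 ?g "\<lambda>t. t powr \<nu> * besselK (\<nu> - 1) t"])
    fix t assume t: "t \<in> {r..1}"
    hence tp: "t > 0" using assms by auto
    have "((\<lambda>t. t powr \<nu> * besselK \<nu> t) has_real_derivative
        (\<nu> * t powr (\<nu> - 1)) * besselK \<nu> t + (- besselK (\<nu> - 1) t - \<nu>/t * besselK \<nu> t) * t powr \<nu>) (at t)"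
      using DERIV_mult[OF has_real_derivative_powr[OF tp, of \<nu>] K_deriv[OF tp, of \<nu>]] by simp
    moreover have e4: "t powr (\<nu> - 1) = t powr \<nu> / t" using tp by (simp add: powr_diff)
    have "(\<nu> * t powr (\<nu> - 1)) * besselK \<nu> t + (- besselK (\<nu> - 1) t - \<nu>/t * besselK \<nu> t) * t powr \<nu>
        = - (t powr \<nu> * besselK (\<nu> - 1) t)"
      unfolding e4 using tp by (simp add: field_simps)
    ultimately show "(?g has_real_derivative t powr \<nu> * besselK (\<nu> - 1) t) (at t)"
      using DERIV_minus by fastforce
    show "0 \<le> t powr \<nu> * besselK (\<nu> - 1) t"
      using Km1_pos[of t n] tp t unfolding \<nu>_def by simp
  qed (use assms in auto)
  thus ?thesis unfolding Kv \<nu>_def[symmetric] by simp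
qed

lemma dI: "0 < x \<Longrightarrow> dIn n x = (real n + 1/2)/x * In n x + besselI (real n + 1/2 + 1) x"
  by (rule DERIV_imp_deriv[OF I_deriv])

lemma I_pos: assumes "0 < x" "0 \<le> \<mu>" shows "0 < besselI \<mu> x"
  using I_S[OF assms(1), of \<mu>] S_pos[OF assms(2), of "x\<^sup>2/4"] assms by simp

lemma In_pos: "0 < x \<Longrightarrow> 0 < In n x"
  by (rule I_pos) auto

lemma dI_ge: "0 < x \<Longrightarrow> (real n + 1/2)/x * In n x \<le> dIn n x"
  using dI[of x n] I_pos[of x "real n + 1/2 + 1"] by simp

lemma dI_pos: "0 < x \<Longrightarrow> 0 < dIn n x"
  using dI_ge[of x n] In_pos[of x n] by (smt (verit) divide_pos_pos mult_pos_pos of_nat_0_le_iff)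

lemma I_decay: assumes "0 < r" "r \<le> 1" shows "In n r \<le> r powr (real n + 1/2) * In n 1"
proof -
  define \<nu> where "\<nu> = real n + 1/2"
  have "In n r = r powr \<nu> * (S \<nu> (r\<^sup>2/4) / 2 powr \<nu>)"
    using I_S[OF assms(1)] assms unfolding \<nu>_def by (simp add: powr_divide)
  also have "\<dots> \<le> r powr \<nu> * (S \<nu> (1/4) / 2 powr \<nu>)"
  proof -
    have r2: "r\<^sup>2 \<le> 1" using assms by (simp add: power_le_one)
    have "S \<nu> (r\<^sup>2/4) \<le> S \<nu> (1/4)" using r2 by (intro S_mono) (auto simp: \<nu>_def)
    hence "S \<nu> (r\<^sup>2/4) / 2 powr \<nu> \<le> S \<nu> (1/4) / 2 powr \<nu>" by (rule divide_right_mono) simp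
    thus ?thesis by (rule mult_left_mono) simp
  qed
  also have "S \<nu> (1/4) / 2 powr \<nu> = In n 1"
  proof -
    have "In n 1 = (1/2) powr \<nu> * S \<nu> (1\<^sup>2/4)" using I_S[of 1 \<nu>] unfolding \<nu>_def by simp
    also have "(1/2::real) powr \<nu> = 1 / 2 powr \<nu>" using powr_divide[of 1 2 \<nu>] by simp
    finally show ?thesis by simp
  qed
  finally show ?thesis unfolding \<nu>_def .
qed

lemma dI_form: assumes "t > 0"
  shows "deriv (besselI \<nu>) t = t powr (\<nu> - 1) * (\<nu> * S \<nu> (t\<^sup>2/4) / 2 powr \<nu>) + t powr (\<nu> + 1) * (S (\<nu>+1) (t\<^sup>2/4) / 2 powr (\<nu>+1))"
proof -
  have e1: "deriv (besselI \<nu>) t = \<nu>/t * besselI \<nu> t + besselI (\<nu>+1) t"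
    by (rule DERIV_imp_deriv[OF I_deriv[OF assms]])
  have e2: "besselI \<nu> t = t powr \<nu> / 2 powr \<nu> * S \<nu> (t\<^sup>2/4)"
    using I_S[OF assms, of \<nu>] assms by (simp add: powr_divide)
  have e3: "besselI (\<nu>+1) t = t powr (\<nu>+1) / 2 powr (\<nu>+1) * S (\<nu>+1) (t\<^sup>2/4)"
    using I_S[OF assms, of "\<nu>+1"] assms by (simp add: powr_divide)
  have e4: "t powr (\<nu> - 1) = t powr \<nu> / t" using assms by (simp add: powr_diff)
  show ?thesis unfolding e1 e2 e3 e4 using assms by (simp add: field_simps)
qed

lemma dI_decay: assumes "0 < r" "r \<le> 1" shows "dIn n r \<le> r powr (real n + 1/2 - 1) * dIn n 1"
proof -
  define \<nu> where "\<nu> = real n + 1/2"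
  have nu: "\<nu> \<ge> 0" unfolding \<nu>_def by simp
  have form: "dIn n t = t powr (\<nu> - 1) * (\<nu> * S \<nu> (t\<^sup>2/4) / 2 powr \<nu>) + t powr (\<nu> + 1) * (S (\<nu>+1) (t\<^sup>2/4) / 2 powr (\<nu>+1))"
    if "t > 0" for t
    using dI_form[OF that, of \<nu>] unfolding \<nu>_def .
  have "dIn n r \<le> r powr (\<nu> - 1) * (\<nu> * S \<nu> (1/4) / 2 powr \<nu>) + r powr (\<nu> - 1) * (S (\<nu>+1) (1/4) / 2 powr (\<nu>+1))"
  proof -
    have r2: "r\<^sup>2 \<le> 1" using assms by (simp add: power_le_one)
    have s1: "S \<nu> (r\<^sup>2/4) \<le> S \<nu> (1/4)" using r2 nu by (intro S_mono) auto
    have s2: "S (\<nu>+1) (r\<^sup>2/4) \<le> S (\<nu>+1) (1/4)" using r2 nu by (intro S_mono) auto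
    have "\<nu> * S \<nu> (r\<^sup>2/4) \<le> \<nu> * S \<nu> (1/4)" using s1 nu by (rule mult_left_mono)
    hence "\<nu> * S \<nu> (r\<^sup>2/4) / 2 powr \<nu> \<le> \<nu> * S \<nu> (1/4) / 2 powr \<nu>" by (rule divide_right_mono) simp
    hence a: "r powr (\<nu> - 1) * (\<nu> * S \<nu> (r\<^sup>2/4) / 2 powr \<nu>) \<le> r powr (\<nu> - 1) * (\<nu> * S \<nu> (1/4) / 2 powr \<nu>)"
      by (rule mult_left_mono) simp
    have "r powr (\<nu> + 1) = r powr ((\<nu> - 1) + 2)" by (simp add: add.commute)
    also have "\<dots> = r powr (\<nu> - 1) * r powr 2" by (rule powr_add)
    also have "r powr 2 = r\<^sup>2" using assms powr_numeral[of r "num.Bit0 num.One"] by simp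
    also have "r powr (\<nu> - 1) * r\<^sup>2 \<le> r powr (\<nu> - 1)" using r2 by (intro mult_left_le) auto
    finally have rp: "r powr (\<nu> + 1) \<le> r powr (\<nu> - 1)" .
    have s3: "S (\<nu>+1) (r\<^sup>2/4) / 2 powr (\<nu>+1) \<le> S (\<nu>+1) (1/4) / 2 powr (\<nu>+1)"
      using s2 by (rule divide_right_mono) simp
    have s4: "0 \<le> S (\<nu>+1) (r\<^sup>2/4) / 2 powr (\<nu>+1)"
      using S_pos[of "\<nu>+1" "r\<^sup>2/4"] nu by simp
    have b: "r powr (\<nu> + 1) * (S (\<nu>+1) (r\<^sup>2/4) / 2 powr (\<nu>+1)) \<le> r powr (\<nu> - 1) * (S (\<nu>+1) (1/4) / 2 powr (\<nu>+1))"
      by (rule mult_mono[OF rp s3 _ s4]) simp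
    show ?thesis using form[OF assms(1)] a b by linarith
  qed
  also have "\<dots> = r powr (\<nu> - 1) * dIn n 1"
  proof -
    have f1: "dIn n 1 = (\<nu> * S \<nu> (1/4) / 2 powr \<nu>) + (S (\<nu>+1) (1/4) / 2 powr (\<nu>+1))"
      using form[of 1] by simp
    show ?thesis unfolding f1 by (simp only: distrib_left)
  qed
  finally show ?thesis unfolding \<nu>_def .
qed


lemma diff_alg:
  fixes \<rho> K1 dK1 I1 dI1 \<nu> t :: real
  assumes nu: "\<nu> \<ge> 1/2" and K1: "K1 > 0" and dI1: "dI1 > 0" and I1: "I1 \<ge> 0" and I1le: "\<nu> * I1 \<le> dI1"
    and dK1: "0 \<le> - dK1" "- dK1 \<le> (1 + \<nu>) * K1" and t: "0 \<le> t" "t \<le> 1/6"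
    and rb: "\<bar>\<rho>\<bar> \<le> t * dI1 / (\<nu> * K1)"
  shows "\<bar>(\<rho> * K1 - I1) / (\<rho> * dK1 - dI1) - I1 / dI1\<bar> \<le> 16 * t"
proof -
  have nK: "\<nu> * K1 > 0" using nu K1 by simp
  have a: "\<bar>\<rho>\<bar> * (\<nu> * K1) \<le> t * dI1" using rb nK by (simp add: le_divide_eq)
  have "\<bar>\<rho> * dK1\<bar> = \<bar>\<rho>\<bar> * (- dK1)" using dK1 by (simp add: abs_mult)
  also have "\<dots> \<le> \<bar>\<rho>\<bar> * ((1 + \<nu>) * K1)" using dK1 by (intro mult_left_mono) auto
  also have "\<dots> \<le> \<bar>\<rho>\<bar> * (3 * (\<nu> * K1))" using nu K1 by (intro mult_left_mono) auto
  also have "\<dots> \<le> 3 * (t * dI1)" using a by simp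
  also have "\<dots> \<le> dI1 / 2" using t dI1 by simp
  finally have b: "\<bar>\<rho> * dK1\<bar> \<le> dI1 / 2" .
  define Den where "Den = \<rho> * dK1 - dI1"
  have Den: "Den \<le> - (dI1 / 2)" unfolding Den_def using b by linarith
  hence Den0: "Den \<noteq> 0" "\<bar>Den\<bar> \<ge> dI1 / 2" using dI1 by auto
  have eq: "(\<rho> * K1 - I1) / Den - I1 / dI1 = \<rho> * (K1 * dI1 - I1 * dK1) / (Den * dI1)"
    using Den0 dI1 by (simp add: field_simps Den_def)
  have W: "\<bar>K1 * dI1 - I1 * dK1\<bar> \<le> 4 * (K1 * dI1)"
  proof -
    have "I1 * (- dK1) \<le> I1 * ((1 + \<nu>) * K1)" using dK1 I1 by (intro mult_left_mono) auto
    also have "\<dots> \<le> I1 * (3 * \<nu> * K1)" using I1 nu K1 by (intro mult_left_mono) auto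
    also have "\<dots> = 3 * K1 * (\<nu> * I1)" by simp
    also have "\<dots> \<le> 3 * K1 * dI1" using I1le K1 by (intro mult_left_mono) auto
    finally have "I1 * (- dK1) \<le> 3 * K1 * dI1" .
    moreover have "0 \<le> I1 * (- dK1)" using I1 dK1 by (intro mult_nonneg_nonneg) auto
    moreover have "0 \<le> K1 * dI1" using K1 dI1 by simp
    ultimately show ?thesis by (simp add: abs_le_iff)
  qed
  have "\<bar>\<rho> * (K1 * dI1 - I1 * dK1) / (Den * dI1)\<bar> = \<bar>\<rho>\<bar> * \<bar>K1 * dI1 - I1 * dK1\<bar> / (\<bar>Den\<bar> * dI1)"
    using dI1 by (simp add: abs_mult)
  also have "\<dots> \<le> \<bar>\<rho>\<bar> * (4 * (K1 * dI1)) / (dI1 / 2 * dI1)"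
    using Den0 dI1 W by (intro frac_le mult_left_mono mult_right_mono) auto
  also have "\<dots> = 8 * (\<bar>\<rho>\<bar> * K1) / dI1"
    using dI1 by (simp add: field_simps)
  also have "\<dots> \<le> 8 * (t * dI1 / \<nu>) / dI1"
  proof -
    have "\<bar>\<rho>\<bar> * K1 \<le> t * dI1 / \<nu>" using a nu by (simp add: le_divide_eq mult_ac)
    thus ?thesis using dI1 by (intro divide_right_mono) auto
  qed
  also have "\<dots> = 8 * t / \<nu>" using dI1 by simp
  also have "\<dots> \<le> 16 * t" using nu t mult_right_mono[of 1 "2*\<nu>" t] by (simp add: divide_le_eq)
  finally show ?thesis unfolding Den_def[symmetric] eq .
qed

lemma diff_bound:
  assumes t: "0 \<le> t" "t \<le> 1/6"
    and rb: "\<bar>rho \<sigma>1 r1 n\<bar> \<le> t * dIn n 1 / ((real n + 1/2) * Kn n 1)"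
  shows "\<bar>diff_mult \<sigma>1 r1 n\<bar> \<le> 16 * t"
  unfolding diff_mult_def mult_cs_def mult_hom_def
proof (rule diff_alg[OF _ K_pos dI_pos _ _ _ negdK1_le t rb])
  show "0 \<le> In n 1" using In_pos[of 1 n] by simp
  show "(real n + 1/2) * In n 1 \<le> dIn n 1" using dI_ge[of 1 n] by simp
  show "0 \<le> - dKn n 1" using negdK_ge[of 1 n] K_pos[of 1 n]
    by (smt (verit) divide_pos_pos mult_pos_pos of_nat_0_le_iff)
qed auto

lemma IK_ratio:
  fixes n :: nat
  assumes r: "0 < r" "r \<le> 1"
  defines "m \<equiv> r powr (2 * (real n + 1/2)) * dIn n 1 / ((real n + 1/2) * Kn n 1)"
  shows "In n r \<le> m * Kn n r" and "dIn n r \<le> m * (- dKn n r)"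
proof -
  define \<nu> where "\<nu> = real n + 1/2"
  have nu: "\<nu> \<ge> 1/2" unfolding \<nu>_def by simp
  define p where "p = r powr \<nu>"
  have p: "p > 0" unfolding p_def using r by simp
  have m: "m = p * p * dIn n 1 / (\<nu> * Kn n 1)"
    unfolding m_def p_def \<nu>_def[symmetric] using r by (simp add: powr_add[symmetric])
  have K1: "Kn n 1 > 0" by (rule K_pos) auto
  have dI1: "dIn n 1 > 0" by (rule dI_pos) auto
  have Kr: "Kn n 1 \<le> p * Kn n r" using K_decay[OF r, of n] unfolding p_def \<nu>_def .
  have Ir: "In n r \<le> p * In n 1" using I_decay[OF r, of n] unfolding p_def \<nu>_def .
  have I1: "\<nu> * In n 1 \<le> dIn n 1" using dI_ge[of 1 n] unfolding \<nu>_def by simp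
  have pr: "r powr (\<nu> - 1) = p / r" unfolding p_def using powr_diff[of r \<nu> 1] r by simp
  have dIr: "dIn n r \<le> p / r * dIn n 1"
    using dI_decay[OF r, of n] unfolding \<nu>_def[symmetric] pr .
  have dKr: "\<nu> / r * Kn n r \<le> - dKn n r" using negdK_ge[OF r, of n] unfolding \<nu>_def .
  have mK: "m * Kn n r \<ge> p * dIn n 1 / \<nu>"
  proof -
    have "p * dIn n 1 / \<nu> = p * dIn n 1 / (\<nu> * Kn n 1) * Kn n 1" using K1 by simp
    also have "\<dots> \<le> p * dIn n 1 / (\<nu> * Kn n 1) * (p * Kn n r)"
      using Kr p dI1 K1 nu by (intro mult_left_mono) auto
    also have "\<dots> = m * Kn n r" unfolding m by simp
    finally show ?thesis .
  qed
  show "In n r \<le> m * Kn n r"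
  proof -
    have "In n r \<le> p * In n 1" by (rule Ir)
    also have "\<dots> \<le> p * (dIn n 1 / \<nu>)" using I1 p nu by (intro mult_left_mono) (auto simp: le_divide_eq mult.commute)
    also have "\<dots> \<le> m * Kn n r" using mK by simp
    finally show ?thesis .
  qed
  show "dIn n r \<le> m * (- dKn n r)"
  proof -
    have "dIn n r \<le> p / r * dIn n 1" by (rule dIr)
    also have "\<dots> = (\<nu> / r) * (p * dIn n 1 / \<nu>)" using nu by simp
    also have "\<dots> \<le> (\<nu> / r) * (m * Kn n r)" using mK nu r by (intro mult_left_mono) auto
    also have "\<dots> = m * (\<nu> / r * Kn n r)" by simp
    also have "\<dots> \<le> m * (- dKn n r)"
    proof (rule mult_left_mono[OF dKr])
      show "0 \<le> m" unfolding m using p dI1 K1 nu by simp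
    qed
    finally show ?thesis .
  qed
qed


lemma ratio_le: "(D::real) > 0 \<Longrightarrow> \<bar>N\<bar> \<le> c * D \<Longrightarrow> \<bar>N / D\<bar> \<le> c"
  by (simp add: abs_div pos_divide_le_eq)

lemma rho_bound2:
  fixes n :: nat
  assumes s: "\<sigma> > 0" and r: "0 < r" "r \<le> 1"
  shows "\<bar>rho \<sigma> r n\<bar> \<le> r powr (2 * (real n + 1/2)) * dIn n 1 / ((real n + 1/2) * Kn n 1)"
proof -
  define m where "m = r powr (2 * (real n + 1/2)) * dIn n 1 / ((real n + 1/2) * Kn n 1)"
  define a where "a = r / sqrt \<sigma>"
  have a: "a > 0" unfolding a_def using s r by simp
  have m0: "m \<ge> 0" unfolding m_def using K_pos[of 1 n] dI_pos[of 1 n] by simp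
  have Ia: "In n a > 0" by (rule In_pos[OF a])
  have dIa: "dIn n a > 0" by (rule dI_pos[OF a])
  have Ir: "In n r > 0" by (rule In_pos[OF r(1)])
  have dIr: "dIn n r > 0" by (rule dI_pos[OF r(1)])
  have Kr: "Kn n r > 0" by (rule K_pos[OF r])
  have dKr: "(real n + 1/2) / r * Kn n r \<le> - dKn n r" by (rule negdK_ge[OF r])
  have dKr0: "- dKn n r > 0" using dKr Kr r
    by (smt (verit) divide_pos_pos mult_pos_pos of_nat_0_le_iff)
  have r1: "In n r \<le> m * Kn n r" and r2: "dIn n r \<le> m * (- dKn n r)"
    using IK_ratio[OF r, of n] unfolding m_def by auto
  define D where "D = \<sigma> * dIn n a * Kn n r - In n a * dKn n r"
  define N where "N = \<sigma> * dIn n a * In n r - In n a * dIn n r"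
  have p1: "\<sigma> * dIn n a * Kn n r > 0" using s dIa Kr by simp
  have p2: "In n a * (- dKn n r) > 0" using mult_pos_pos[OF Ia dKr0] .
  have D: "D > 0" unfolding D_def using p1 p2 by simp
  have p3: "\<sigma> * dIn n a * In n r > 0" using s dIa Ir by simp
  have p4: "In n a * dIn n r > 0" using Ia dIr by simp
  have "\<bar>N\<bar> \<le> \<sigma> * dIn n a * In n r + In n a * dIn n r"
    unfolding N_def using p3 p4 by arith
  also have "\<dots> \<le> \<sigma> * dIn n a * (m * Kn n r) + In n a * (m * (- dKn n r))"
    using s dIa Ia r1 r2 by (intro add_mono mult_left_mono) auto
  also have "\<dots> = m * D" unfolding D_def by (simp add: algebra_simps)
  finally have "\<bar>N / D\<bar> \<le> m" using D by (intro ratio_le) auto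
  thus ?thesis unfolding rho_def m_def N_def D_def a_def .
qed

lemma S_lip1:
  assumes mu: "\<mu> \<ge> 0" and R: "0 \<le> R" "R \<le> A" and A: "A \<le> 1/4"
  shows "\<bar>S \<mu> A - S \<mu> R\<bar> \<le> 4/3 * rGamma (\<mu> + 1 + 1) * (A - R)"
proof -
  define L where "L = 4/3 * rGamma (\<mu> + 1 + 1)"
  have m: "S \<mu> R \<le> S \<mu> A" using S_mono[OF mu R] .
  have "(\<lambda>y. L * y - S \<mu> y) R \<le> (\<lambda>y. L * y - S \<mu> y) A"
  proof (rule deriv_nonneg_imp_mono[of R A _ "\<lambda>y. L - S (\<mu>+1) y"])
    fix y assume y: "y \<in> {R..A}"
    show "((\<lambda>y. L * y - S \<mu> y) has_real_derivative L - S (\<mu>+1) y) (at y)"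
      using DERIV_diff[OF DERIV_cmult[OF DERIV_ident, of L y] S_deriv[of \<mu> y]] by simp
    have "S (\<mu>+1) y \<le> 4/3 * rGamma (\<mu> + 1 + 1)" using y R A mu by (intro S_le) auto
    thus "0 \<le> L - S (\<mu>+1) y" unfolding L_def by simp
  qed (use R in auto)
  thus ?thesis using m unfolding L_def by (simp add: algebra_simps)
qed

lemma S_lip:
  assumes mu: "\<mu> \<ge> 0" and "0 \<le> R" "R \<le> 1/4" "0 \<le> A" "A \<le> 1/4"
  shows "\<bar>S \<mu> A - S \<mu> R\<bar> \<le> 4/3 * rGamma (\<mu> + 1 + 1) * \<bar>A - R\<bar>"
proof (cases "R \<le> A")
  case True thus ?thesis using S_lip1[OF mu \<open>0 \<le> R\<close> True \<open>A \<le> 1/4\<close>] by simp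
next
  case False
  hence "A \<le> R" by simp
  thus ?thesis using S_lip1[OF mu \<open>0 \<le> A\<close> _ \<open>R \<le> 1/4\<close>] by (simp add: abs_minus_commute)
qed

lemma B_alg:
  fixes \<nu> g SA SR TA TR A R \<sigma> a r :: real
  assumes nu: "\<nu> \<ge> 1/2" and g: "g > 0"
    and SA: "g \<le> SA" "SA \<le> 2*g" and SR: "g \<le> SR" "SR \<le> 2*g"
    and TA: "0 \<le> TA" "TA \<le> 2*g" and TR: "0 \<le> TR" "TR \<le> 2*g"
    and dS: "\<bar>SA - SR\<bar> \<le> 2*g*\<bar>A - R\<bar>" and dT: "\<bar>TA - TR\<bar> \<le> 2*g*\<bar>A - R\<bar>"
    and a: "a > 0" and r: "0 < r" "r \<le> 1"
  shows "\<bar>\<sigma> * (\<nu>/a * SA + a/2 * TA) * SR - SA * (\<nu>/r * SR + r/2 * TR)\<bar>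
         \<le> 4 * g\<^sup>2 * \<nu> * (\<bar>\<sigma>/a - 1/r\<bar> + 2 * \<bar>\<sigma>*a - r\<bar> + 2 * \<bar>A - R\<bar>)"
proof -
  have eq: "\<sigma> * (\<nu>/a * SA + a/2 * TA) * SR - SA * (\<nu>/r * SR + r/2 * TR)
      = \<nu> * (SA * SR) * (\<sigma>/a - 1/r) + (\<sigma>*a - r)/2 * (TA * SR) + r/2 * ((TA - TR) * SR + TR * (SR - SA))"
    using a r by (simp add: field_simps)
  have SS: "SA * SR \<le> 4 * g\<^sup>2"
  proof -
    have "SA * SR \<le> (2*g) * (2*g)" using SA SR g by (intro mult_mono) auto
    thus ?thesis by (simp add: power2_eq_square)
  qed
  have TS: "TA * SR \<le> 4 * g\<^sup>2"
  proof -
    have "TA * SR \<le> (2*g) * (2*g)" using TA SR g by (intro mult_mono) auto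
    thus ?thesis by (simp add: power2_eq_square)
  qed
  have SS0: "0 \<le> SA * SR" using SA SR g by simp
  have TS0: "0 \<le> TA * SR" using TA SR g by simp
  have t1: "\<bar>\<nu> * (SA * SR) * (\<sigma>/a - 1/r)\<bar> \<le> 4 * g\<^sup>2 * \<nu> * \<bar>\<sigma>/a - 1/r\<bar>"
  proof -
    have "\<bar>\<nu> * (SA * SR) * (\<sigma>/a - 1/r)\<bar> = \<nu> * (SA * SR) * \<bar>\<sigma>/a - 1/r\<bar>"
      using nu SS0 abs_mult[of "\<nu> * (SA * SR)" "\<sigma>/a - 1/r"] abs_of_nonneg[of "\<nu> * (SA * SR)"] by simp
    also have "\<dots> \<le> \<nu> * (4 * g\<^sup>2) * \<bar>\<sigma>/a - 1/r\<bar>"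
      using nu SS by (intro mult_right_mono mult_left_mono) auto
    finally show ?thesis by (simp add: mult_ac)
  qed
  have t2: "\<bar>(\<sigma>*a - r)/2 * (TA * SR)\<bar> \<le> 4 * g\<^sup>2 * \<nu> * (2 * \<bar>\<sigma>*a - r\<bar>)"
  proof -
    have "\<bar>(\<sigma>*a - r)/2 * (TA * SR)\<bar> = \<bar>\<sigma>*a - r\<bar> / 2 * (TA * SR)"
      using TS0 abs_mult[of "(\<sigma>*a - r)/2" "TA * SR"] abs_of_nonneg[of "TA * SR"] by simp
    also have "\<dots> \<le> \<bar>\<sigma>*a - r\<bar> / 2 * (4 * g\<^sup>2)"
      using TS by (intro mult_left_mono) auto
    also have "\<dots> \<le> 4 * g\<^sup>2 * \<nu> * (2 * \<bar>\<sigma>*a - r\<bar>)"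
    proof -
      have "\<bar>\<sigma>*a - r\<bar> / 2 * (4 * g\<^sup>2) = (4 * g\<^sup>2) * (1/2) * \<bar>\<sigma>*a - r\<bar>" by simp
      also have "\<dots> \<le> (4 * g\<^sup>2) * (2 * \<nu>) * \<bar>\<sigma>*a - r\<bar>"
        using nu by (intro mult_right_mono mult_left_mono) auto
      finally show ?thesis by (simp add: mult_ac)
    qed
    finally show ?thesis .
  qed
  have t3: "\<bar>r/2 * ((TA - TR) * SR + TR * (SR - SA))\<bar> \<le> 4 * g\<^sup>2 * \<nu> * (2 * \<bar>A - R\<bar>)"
  proof -
    have u1: "\<bar>(TA - TR) * SR\<bar> \<le> 2*g*\<bar>A - R\<bar> * (2*g)"
      unfolding abs_mult using SR g dT by (intro mult_mono) auto
    have u2: "\<bar>TR * (SR - SA)\<bar> \<le> 2*g * (2*g*\<bar>A - R\<bar>)"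
      unfolding abs_mult using TR g dS by (intro mult_mono) (auto simp: abs_minus_commute)
    have "\<bar>(TA - TR) * SR + TR * (SR - SA)\<bar> \<le> 8 * g\<^sup>2 * \<bar>A - R\<bar>"
      using u1 u2 abs_triangle_ineq[of "(TA - TR) * SR" "TR * (SR - SA)"]
      by (simp add: power2_eq_square algebra_simps)
    hence "\<bar>r/2 * ((TA - TR) * SR + TR * (SR - SA))\<bar> \<le> r/2 * (8 * g\<^sup>2 * \<bar>A - R\<bar>)"
      using r by (simp add: abs_mult mult_ac)
    also have "\<dots> \<le> 1/2 * (8 * g\<^sup>2 * \<bar>A - R\<bar>)" using r by (intro mult_right_mono) auto
    also have "\<dots> = 1 * (4 * g\<^sup>2 * \<bar>A - R\<bar>)" by simp
    also have "\<dots> \<le> (2 * \<nu>) * (4 * g\<^sup>2 * \<bar>A - R\<bar>)" using nu by (intro mult_right_mono) auto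
    finally show ?thesis by (simp add: mult_ac)
  qed
  have "\<bar>\<sigma> * (\<nu>/a * SA + a/2 * TA) * SR - SA * (\<nu>/r * SR + r/2 * TR)\<bar>
     \<le> 4 * g\<^sup>2 * \<nu> * \<bar>\<sigma>/a - 1/r\<bar> + 4 * g\<^sup>2 * \<nu> * (2 * \<bar>\<sigma>*a - r\<bar>) + 4 * g\<^sup>2 * \<nu> * (2 * \<bar>A - R\<bar>)"
  proof -
    have tri: "\<bar>X + Y + Z\<bar> \<le> \<bar>X\<bar> + \<bar>Y\<bar> + \<bar>Z\<bar>" for X Y Z :: real
      by (rule order_trans[OF abs_triangle_ineq add_right_mono[OF abs_triangle_ineq]])
    show ?thesis unfolding eq using t1 t2 t3 tri[of "\<nu> * (SA * SR) * (\<sigma>/a - 1/r)" "(\<sigma>*a - r)/2 * (TA * SR)" "r/2 * ((TA - TR) * SR + TR * (SR - SA))"]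
      by linarith
  qed
  thus ?thesis by (simp add: algebra_simps)
qed


lemma I_P:
  fixes n :: nat
  assumes x: "x > 0"
  shows "In n x = x powr (real n + 1/2) / 2 powr (real n + 1/2) * S (real n + 1/2) (x\<^sup>2/4)"
    and "dIn n x = x powr (real n + 1/2) / 2 powr (real n + 1/2) *
           ((real n + 1/2)/x * S (real n + 1/2) (x\<^sup>2/4) + x/2 * S (real n + 1/2 + 1) (x\<^sup>2/4))"
proof -
  define \<nu> where "\<nu> = real n + 1/2"
  show "In n x = x powr (real n + 1/2) / 2 powr (real n + 1/2) * S (real n + 1/2) (x\<^sup>2/4)"
    using I_S[OF x, of "real n + 1/2"] x by (simp add: powr_divide)
  have e1: "x powr (\<nu> - 1) = x powr \<nu> / x" using powr_diff[of x \<nu> 1] x by simp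
  have e2: "x powr (\<nu> + 1) = x powr \<nu> * x" using powr_add[of x \<nu> 1] x by simp
  have e3: "(2::real) powr (\<nu> + 1) = 2 powr \<nu> * 2" using powr_add[of 2 \<nu> 1] by simp
  have "deriv (besselI \<nu>) x = x powr \<nu> / 2 powr \<nu> * (\<nu>/x * S \<nu> (x\<^sup>2/4) + x/2 * S (\<nu> + 1) (x\<^sup>2/4))"
    unfolding dI_form[OF x, of \<nu>] e1 e2 e3 using x by (simp add: field_simps)
  thus "dIn n x = x powr (real n + 1/2) / 2 powr (real n + 1/2) *
           ((real n + 1/2)/x * S (real n + 1/2) (x\<^sup>2/4) + x/2 * S (real n + 1/2 + 1) (x\<^sup>2/4))"
    unfolding \<nu>_def .
qed

lemma rho_bound1:
  fixes n :: nat
  assumes s: "\<sigma> > 0" and r: "0 < r" "r \<le> 1" and ar: "r / sqrt \<sigma> \<le> 1"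
  shows "\<bar>rho \<sigma> r n\<bar> \<le> 4 * (\<bar>\<sigma> / (r / sqrt \<sigma>) - 1/r\<bar> + 2 * \<bar>\<sigma> * (r / sqrt \<sigma>) - r\<bar>
            + 2 * \<bar>(r / sqrt \<sigma>)\<^sup>2/4 - r\<^sup>2/4\<bar>) *
          (r powr (2 * (real n + 1/2)) * dIn n 1 / ((real n + 1/2) * Kn n 1))"
proof -
  define \<nu> where "\<nu> = real n + 1/2"
  have nu: "\<nu> \<ge> 1/2" "\<nu> \<ge> 0" unfolding \<nu>_def by simp_all
  define m where "m = r powr (2 * (real n + 1/2)) * dIn n 1 / ((real n + 1/2) * Kn n 1)"
  define a where "a = r / sqrt \<sigma>"
  define A where "A = a\<^sup>2/4"
  define R where "R = r\<^sup>2/4"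
  define \<epsilon> where "\<epsilon> = \<bar>\<sigma> / a - 1/r\<bar> + 2 * \<bar>\<sigma> * a - r\<bar> + 2 * \<bar>A - R\<bar>"
  have a: "a > 0" "a \<le> 1" unfolding a_def using s r ar by simp_all
  have A: "0 \<le> A" "A \<le> 1/4" unfolding A_def using a by (auto simp: power_le_one)
  have R: "0 \<le> R" "R \<le> 1/4" unfolding R_def using r by (auto simp: power_le_one)
  have m0: "m \<ge> 0" unfolding m_def using K_pos[of 1 n] dI_pos[of 1 n] by simp
  have eps0: "\<epsilon> \<ge> 0" unfolding \<epsilon>_def by simp
  define g where "g = rGamma (\<nu> + 1)"
  have g: "g > 0" unfolding g_def using nu by (intro rGamma_pos) auto
  define SA where "SA = S \<nu> A"
  define SR where "SR = S \<nu> R"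
  define TA where "TA = S (\<nu>+1) A"
  define TR where "TR = S (\<nu>+1) R"
  have g1: "rGamma (\<nu> + 1 + 1) \<le> g" unfolding g_def using rGamma_succ_le[OF nu(2)] .
  have g2: "rGamma (\<nu> + 1 + 1 + 1) \<le> g" using rGamma_succ_le[of "\<nu>+1"] nu g1 by simp
  have SA: "g \<le> SA" "SA \<le> 2*g" unfolding SA_def g_def
    using S_ge0[OF nu(2) A(1)] S_le[OF nu(2) A] rGamma_pos[of "\<nu>+1"] nu by auto
  have SR: "g \<le> SR" "SR \<le> 2*g" unfolding SR_def g_def
    using S_ge0[OF nu(2) R(1)] S_le[OF nu(2) R] rGamma_pos[of "\<nu>+1"] nu by auto
  have TA: "0 \<le> TA" "TA \<le> 2*g" unfolding TA_def
    using S_pos[of "\<nu>+1" A] S_le[of "\<nu>+1" A] A nu g1 g by auto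
  have TR: "0 \<le> TR" "TR \<le> 2*g" unfolding TR_def
    using S_pos[of "\<nu>+1" R] S_le[of "\<nu>+1" R] R nu g1 g by auto
  have dS: "\<bar>SA - SR\<bar> \<le> 2*g*\<bar>A - R\<bar>"
  proof -
    have "\<bar>SA - SR\<bar> \<le> 4/3 * rGamma (\<nu> + 1 + 1) * \<bar>A - R\<bar>"
      unfolding SA_def SR_def using S_lip[OF nu(2) R A] .
    also have "\<dots> \<le> 2*g*\<bar>A - R\<bar>" using g1 g by (intro mult_right_mono) auto
    finally show ?thesis .
  qed
  have dT: "\<bar>TA - TR\<bar> \<le> 2*g*\<bar>A - R\<bar>"
  proof -
    have "\<bar>TA - TR\<bar> \<le> 4/3 * rGamma (\<nu> + 1 + 1 + 1) * \<bar>A - R\<bar>"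
      unfolding TA_def TR_def using S_lip[of "\<nu>+1" R A] R A nu by simp
    also have "\<dots> \<le> 2*g*\<bar>A - R\<bar>" using g2 g by (intro mult_right_mono) auto
    finally show ?thesis .
  qed
  define Bx where "Bx = \<sigma> * (\<nu>/a * SA + a/2 * TA) * SR - SA * (\<nu>/r * SR + r/2 * TR)"
  have Bx: "\<bar>Bx\<bar> \<le> 4 * g\<^sup>2 * \<nu> * \<epsilon>"
    unfolding Bx_def \<epsilon>_def by (rule B_alg[OF nu(1) g SA SR TA TR dS dT a(1) r])
  define Pa where "Pa = a powr \<nu> / 2 powr \<nu>"
  define Pr where "Pr = r powr \<nu> / 2 powr \<nu>"
  have Pa: "Pa > 0" unfolding Pa_def using a by simp
  have Pr: "Pr > 0" unfolding Pr_def using r by simp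
  have Ia: "In n a = Pa * SA" and dIa: "dIn n a = Pa * (\<nu>/a * SA + a/2 * TA)"
    using I_P[OF a(1), of n] unfolding Pa_def SA_def TA_def A_def \<nu>_def by auto
  have Ir: "In n r = Pr * SR" and dIr: "dIn n r = Pr * (\<nu>/r * SR + r/2 * TR)"
    using I_P[OF r(1), of n] unfolding Pr_def SR_def TR_def R_def \<nu>_def by auto
  have Kr: "Kn n r > 0" by (rule K_pos[OF r])
  have dKr: "\<nu> / r * Kn n r \<le> - dKn n r" using negdK_ge[OF r, of n] unfolding \<nu>_def .
  have rK1: "In n r \<le> m * Kn n r" using IK_ratio(1)[OF r, of n] unfolding m_def .
  define D where "D = \<sigma> * dIn n a * Kn n r - In n a * dKn n r"
  define N where "N = \<sigma> * dIn n a * In n r - In n a * dIn n r"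
  have dIa0: "dIn n a > 0" by (rule dI_pos[OF a(1)])
  have Ia0: "In n a > 0" by (rule In_pos[OF a(1)])
  have Dlow: "D \<ge> Pa * SA * (\<nu> / r * Kn n r)"
  proof -
    have "0 \<le> \<sigma> * dIn n a * Kn n r" using s dIa0 Kr by simp
    moreover have "In n a * (\<nu> / r * Kn n r) \<le> In n a * (- dKn n r)"
      using Ia0 dKr by (intro mult_left_mono) auto
    ultimately show ?thesis unfolding D_def Ia by simp
  qed
  have D: "D > 0"
  proof -
    have "0 < Pa * SA * (\<nu> / r * Kn n r)" using Pa SA g nu r Kr by simp
    thus ?thesis using Dlow by linarith
  qed
  have N: "N = Pa * Pr * Bx" unfolding N_def Bx_def Ia dIa Ir dIr by (simp add: algebra_simps)
  define X1 where "X1 = 4 * \<epsilon> * Pa * \<nu>"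
  have X1: "X1 \<ge> 0" unfolding X1_def using eps0 Pa nu by simp
  have "\<bar>N\<bar> \<le> Pa * Pr * (4 * g\<^sup>2 * \<nu> * \<epsilon>)"
    unfolding N abs_mult using Pa Pr Bx by simp
  also have "\<dots> = X1 * (g * (Pr * g))" unfolding X1_def by (simp add: power2_eq_square mult_ac)
  also have "\<dots> \<le> X1 * ((1/r) * SA * (Pr * SR))"
  proof (rule mult_left_mono[OF _ X1])
    have "g * (Pr * g) \<le> SA * (Pr * SR)" using SA SR Pr g by (intro mult_mono) auto
    also have "\<dots> \<le> (1/r) * (SA * (Pr * SR))"
    proof -
      have h1: "1 \<le> 1/r" using r by simp
      have h2: "0 \<le> SA * (Pr * SR)" using SA SR Pr g by simp
      from mult_right_mono[OF h1 h2] show ?thesis by simp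
    qed
    finally show "g * (Pr * g) \<le> (1/r) * SA * (Pr * SR)" by (simp add: mult_ac)
  qed
  also have "\<dots> \<le> X1 * ((1/r) * SA * (m * Kn n r))"
    using rK1 X1 r SA g unfolding Ir by (intro mult_left_mono) auto
  also have "\<dots> = (4 * \<epsilon> * m) * (Pa * SA * (\<nu> / r * Kn n r))" unfolding X1_def by (simp add: field_simps)
  also have "\<dots> \<le> (4 * \<epsilon> * m) * D" using Dlow eps0 m0 by (intro mult_left_mono) auto
  finally have "\<bar>N / D\<bar> \<le> 4 * \<epsilon> * m" using D by (intro ratio_le) auto
  thus ?thesis unfolding rho_def m_def N_def D_def \<epsilon>_def A_def R_def a_def by (simp add: mult_ac)
qed


lemma sw_half: "sob_weight (1/2) n = sqrt (1 + real n * (real n + 1))"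
  unfolding sob_weight_def by (rule powr_half_sqrt) simp

lemma sw_mhalf: "sob_weight (-1/2) n = 1 / sqrt (1 + real n * (real n + 1))"
proof -
  have "sob_weight (-1/2) n = 1 / (1 + real n * (real n + 1)) powr (1/2)"
    unfolding sob_weight_def using powr_minus_divide[of "1 + real n * (real n + 1)" "1/2"] by simp
  thus ?thesis by (simp add: powr_half_sqrt)
qed

lemma sqrt_w_le: "sqrt (1 + real n * (real n + 1)) \<le> real n + 1"
proof -
  have "sqrt (1 + real n * (real n + 1)) \<le> sqrt ((real n + 1)\<^sup>2)"
    by (rule real_sqrt_le_mono) (simp add: power2_eq_square algebra_simps)
  thus ?thesis by simp
qed

lemma pointwise:
  assumes B: "\<bar>l\<bar> * (real n + 1) \<le> B"
  shows "sob_weight (1/2) n * (cmod (complex_of_real l * z))\<^sup>2 \<le> B\<^sup>2 * (sob_weight (-1/2) n * (cmod z)\<^sup>2)"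
proof -
  define q where "q = sqrt (1 + real n * (real n + 1))"
  have q: "q > 0" unfolding q_def by (simp add: add_pos_nonneg)
  have lq: "\<bar>l\<bar> * q \<le> B"
    using B sqrt_w_le[of n] unfolding q_def[symmetric]
    by (meson abs_ge_zero mult_left_mono order_trans)
  have lq0: "0 \<le> \<bar>l\<bar> * q" using q by simp
  have lq2: "(\<bar>l\<bar> * q)\<^sup>2 \<le> B\<^sup>2" using lq lq0 by (intro power_mono) auto
  have "sob_weight (1/2) n * (cmod (complex_of_real l * z))\<^sup>2 = (\<bar>l\<bar> * q)\<^sup>2 * ((cmod z)\<^sup>2 / q)"
    unfolding sw_half q_def[symmetric] using q by (simp add: norm_mult power_mult_distrib power2_eq_square)
  also have "\<dots> \<le> B\<^sup>2 * ((cmod z)\<^sup>2 / q)" using lq2 q by (intro mult_right_mono) auto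
  also have "\<dots> = B\<^sup>2 * (sob_weight (-1/2) n * (cmod z)\<^sup>2)" unfolding sw_mhalf q_def[symmetric] by simp
  finally show ?thesis .
qed

lemma Hnorm_nonneg: "Hnorm s c \<ge> 0"
  unfolding Hnorm_def by (intro real_sqrt_ge_zero infsum_nonneg) (auto simp: sob_weight_def)

lemma opnorm_bound:
  assumes B0: "B \<ge> 0" and B: "\<And>n. \<bar>lam n\<bar> * (real n + 1) \<le> B"
  shows "bounded_op lam" "0 \<le> op_norm lam" "op_norm lam \<le> B"
proof -
  have main: "inH (1/2) (mult_op lam c) \<and> Hnorm (1/2) (mult_op lam c) \<le> B * Hnorm (-1/2) c"
    if c: "inH (-1/2) c" for c
  proof -
    let ?f = "\<lambda>(n, m). sob_weight (-1/2) n * (cmod (c n m))\<^sup>2"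
    let ?g = "\<lambda>(n, m). sob_weight (1/2) n * (cmod (mult_op lam c n m))\<^sup>2"
    let ?h = "\<lambda>x. B\<^sup>2 * ?f x"
    have fs: "?f summable_on sh_idx" using c unfolding inH_def .
    have hs: "?h summable_on sh_idx" by (rule summable_on_cmult_right[OF fs])
    have le: "?g x \<le> ?h x" for x
      by (cases x) (use pointwise[OF B] in \<open>simp add: mult_op_def\<close>)
    have ge: "0 \<le> ?g x" for x
      by (cases x) (simp add: sob_weight_def)
    have gs: "?g summable_on sh_idx"
      by (rule summable_on_comparison_test[OF hs]) (use le ge in auto)
    have "infsum ?g sh_idx \<le> infsum ?h sh_idx" by (rule infsum_mono[OF gs hs le])
    also have "\<dots> = B\<^sup>2 * infsum ?f sh_idx" by (rule infsum_cmult_right[OF fs])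
    finally have "sqrt (infsum ?g sh_idx) \<le> sqrt (B\<^sup>2 * infsum ?f sh_idx)" by simp
    also have "\<dots> = B * sqrt (infsum ?f sh_idx)" using B0 by (simp add: real_sqrt_mult)
    finally show ?thesis unfolding inH_def Hnorm_def using gs by simp
  qed
  show "bounded_op lam" unfolding bounded_op_def using main by blast
  define C where "C = {c. inH (-1/2) c \<and> Hnorm (-1/2) c \<noteq> 0}"
  define F where "F = (\<lambda>c. Hnorm (1/2) (mult_op lam c) / Hnorm (-1/2) c)"
  have FB: "F c \<le> B" if "c \<in> C" for c
  proof -
    have hp: "Hnorm (-1/2) c > 0" using that Hnorm_nonneg[of "-1/2" c] unfolding C_def by simp
    have "Hnorm (1/2) (mult_op lam c) \<le> B * Hnorm (-1/2) c" using main that unfolding C_def by blast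
    thus ?thesis unfolding F_def using hp by (simp add: divide_le_eq)
  qed
  have F0: "F c \<ge> 0" for c unfolding F_def using Hnorm_nonneg by simp
  define c0 :: "nat \<Rightarrow> int \<Rightarrow> complex" where "c0 = (\<lambda>n m. if n = 0 \<and> m = 0 then 1 else 0)"
  have hs0: "((\<lambda>(n, m). sob_weight (-1/2) n * (cmod (c0 n m))\<^sup>2) has_sum 1) sh_idx"
    by (rule has_sum_finite_neutralI[of "{(0,0)}"]) (auto simp: sh_idx_def c0_def sob_weight_def split: if_splits)
  have c0C: "c0 \<in> C"
    using has_sum_imp_summable[OF hs0] infsumI[OF hs0] unfolding C_def inH_def Hnorm_def by simp
  have bdd: "bdd_above (F ` C)" using FB by (intro bdd_aboveI2) auto
  show "0 \<le> op_norm lam"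
  proof -
    have "F c0 \<le> (SUP c\<in>C. F c)" by (rule cSUP_upper[OF c0C bdd])
    thus ?thesis using F0[of c0] unfolding op_norm_def C_def[symmetric] F_def[symmetric] by linarith
  qed
  show "op_norm lam \<le> B"
    unfolding op_norm_def C_def[symmetric] F_def[symmetric]
    by (rule cSUP_least) (use c0C FB in auto)
qed


lemma nq_bound: assumes "0 \<le> q" "q < 1" shows "(real n + 1) * q ^ n \<le> 1 / (1 - q)"
proof -
  have "(real n + 1) * q ^ n = (\<Sum>i<Suc n. q ^ n)" by simp
  also have "\<dots> \<le> (\<Sum>i<Suc n. q ^ i)"
    using assms by (intro sum_mono power_decreasing) auto
  also have "\<dots> = (1 - q ^ Suc n) / (1 - q)"
  proof -
    have "q \<noteq> 1" using assms by simp
    thus ?thesis by (simp only: sum_gp_strict if_False)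
  qed
  also have "\<dots> \<le> 1 / (1 - q)" using assms by (intro divide_right_mono) auto
  finally show ?thesis .
qed

lemma rpow_odd: assumes "0 < r" shows "r powr (2 * (real n + 1/2)) = r * (r\<^sup>2) ^ n"
proof -
  have "r powr (2 * (real n + 1/2)) = r powr (real (Suc (2*n)))" by (simp add: algebra_simps)
  also have "\<dots> = r ^ Suc (2*n)" using assms by (rule powr_realpow)
  finally show ?thesis by (simp add: power_mult)
qed

lemma key_bound:
  assumes r: "0 < r" "r < 1" and C: "C \<ge> 0"
    and b: "\<And>n. \<bar>lam n\<bar> \<le> 16 * (C * r powr (2 * (real n + 1/2)))"
  shows "\<bar>lam n\<bar> * (real n + 1) \<le> 16 * C * r / (1 - r\<^sup>2)"
proof -
  have q: "0 \<le> r\<^sup>2" "r\<^sup>2 < 1" using r by (auto simp: power_less_one_iff abs_less_iff)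
  have "\<bar>lam n\<bar> * (real n + 1) \<le> 16 * (C * (r * (r\<^sup>2) ^ n)) * (real n + 1)"
    using b[of n] rpow_odd[OF r(1), of n] by (intro mult_right_mono) auto
  also have "\<dots> = 16 * C * r * ((real n + 1) * (r\<^sup>2) ^ n)" by (simp add: mult_ac)
  also have "\<dots> \<le> 16 * C * r * (1 / (1 - r\<^sup>2))"
    using nq_bound[OF q, of n] C r by (intro mult_left_mono) auto
  finally show ?thesis by simp
qed

lemma rpow_le1: "0 < r \<Longrightarrow> r \<le> 1 \<Longrightarrow> r powr (2 * (real n + 1/2)) \<le> r"
proof -
  assume r: "0 < r" "r \<le> 1"
  have "r * (r\<^sup>2) ^ n \<le> r * 1" using r by (intro mult_left_mono power_le_one) (auto simp: power_le_one)
  thus ?thesis using rpow_odd[OF r(1), of n] by simp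
qed

lemma part1:
  assumes r: "0 < r" "r < 1"
  shows "(\<forall>\<^sub>F \<sigma>1 in at 1 within {0<..}. bounded_op (diff_mult \<sigma>1 r)) \<and>
         ((\<lambda>\<sigma>1. op_norm (diff_mult \<sigma>1 r)) \<longlongrightarrow> 0) (at 1 within {0<..})"
proof -
  define \<epsilon> where "\<epsilon> = (\<lambda>\<sigma>::real. \<bar>\<sigma> / (r / sqrt \<sigma>) - 1/r\<bar> + 2 * \<bar>\<sigma> * (r / sqrt \<sigma>) - r\<bar>
            + 2 * \<bar>(r / sqrt \<sigma>)\<^sup>2/4 - r\<^sup>2/4\<bar>)"
  define F where "F = at (1::real) within {0<..}"
  have e_lim: "(\<epsilon> \<longlongrightarrow> 0) F"
  proof -
    have "(\<epsilon> \<longlongrightarrow> \<bar>1 / (r / sqrt 1) - 1/r\<bar> + 2 * \<bar>1 * (r / sqrt 1) - r\<bar> + 2 * \<bar>(r / sqrt 1)\<^sup>2/4 - r\<^sup>2/4\<bar>) F"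
      unfolding \<epsilon>_def F_def using r by (intro tendsto_intros) auto
    thus ?thesis by simp
  qed
  have ev1: "\<forall>\<^sub>F \<sigma> in F. \<sigma> > 0"
    unfolding F_def eventually_at_filter by simp
  have ev2: "\<forall>\<^sub>F \<sigma> in F. r / sqrt \<sigma> < 1"
  proof -
    have "((\<lambda>\<sigma>. r / sqrt \<sigma>) \<longlongrightarrow> r / sqrt 1) F" unfolding F_def by (intro tendsto_intros) auto
    from order_tendstoD(2)[OF this] show ?thesis using r by simp
  qed
  have ev3: "\<forall>\<^sub>F \<sigma> in F. \<epsilon> \<sigma> < 1/24"
    using order_tendstoD(2)[OF e_lim, of "1/24"] by simp
  have main: "\<forall>\<^sub>F \<sigma> in F. bounded_op (diff_mult \<sigma> r) \<and> 0 \<le> op_norm (diff_mult \<sigma> r) \<and>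
                op_norm (diff_mult \<sigma> r) \<le> 16 * (4 * \<epsilon> \<sigma>) * r / (1 - r\<^sup>2)"
    using ev1 ev2 ev3
  proof eventually_elim
    case (elim \<sigma>)
    have e0: "\<epsilon> \<sigma> \<ge> 0" unfolding \<epsilon>_def by simp
    have bn: "\<bar>diff_mult \<sigma> r n\<bar> \<le> 16 * (4 * \<epsilon> \<sigma> * r powr (2 * (real n + 1/2)))" for n
    proof (rule diff_bound)
      have p: "r powr (2 * (real n + 1/2)) \<le> 1" using rpow_le1[of r n] r by simp
      show "0 \<le> 4 * \<epsilon> \<sigma> * r powr (2 * (real n + 1/2))" using e0 by simp
      have "4 * \<epsilon> \<sigma> * r powr (2 * (real n + 1/2)) \<le> 4 * \<epsilon> \<sigma> * 1"
        using p e0 by (intro mult_left_mono) auto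
      thus "4 * \<epsilon> \<sigma> * r powr (2 * (real n + 1/2)) \<le> 1/6" using elim by simp
      show "\<bar>rho \<sigma> r n\<bar> \<le> 4 * \<epsilon> \<sigma> * r powr (2 * (real n + 1/2)) * dIn n 1 / ((real n + 1/2) * Kn n 1)"
        using rho_bound1[of \<sigma> r n] elim r unfolding \<epsilon>_def by (simp add: mult_ac)
    qed
    have B: "\<bar>diff_mult \<sigma> r n\<bar> * (real n + 1) \<le> 16 * (4 * \<epsilon> \<sigma>) * r / (1 - r\<^sup>2)" for n
      by (rule key_bound[OF r]) (use e0 bn in \<open>auto simp: mult_ac\<close>)
    have B0: "0 \<le> 16 * (4 * \<epsilon> \<sigma>) * r / (1 - r\<^sup>2)"
      using e0 r by (simp add: power_le_one)
    show ?case using opnorm_bound[OF B0 B] by blast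
  qed
  have lim: "((\<lambda>\<sigma>. 16 * (4 * \<epsilon> \<sigma>) * r / (1 - r\<^sup>2)) \<longlongrightarrow> 16 * (4 * 0) * r / (1 - r\<^sup>2)) F"
  proof -
    have "r\<^sup>2 < 1" using r by (auto simp: power_less_one_iff abs_less_iff)
    thus ?thesis by (intro tendsto_intros e_lim) auto
  qed
  show ?thesis unfolding F_def[symmetric]
  proof
    show "\<forall>\<^sub>F \<sigma> in F. bounded_op (diff_mult \<sigma> r)" using main by (rule eventually_mono) blast
    show "((\<lambda>\<sigma>. op_norm (diff_mult \<sigma> r)) \<longlongrightarrow> 0) F"
    proof (rule tendsto_sandwich[OF _ _ tendsto_const])
      show "\<forall>\<^sub>F \<sigma> in F. 0 \<le> op_norm (diff_mult \<sigma> r)" using main by (rule eventually_mono) blast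
      show "\<forall>\<^sub>F \<sigma> in F. op_norm (diff_mult \<sigma> r) \<le> 16 * (4 * \<epsilon> \<sigma>) * r / (1 - r\<^sup>2)"
        using main by (rule eventually_mono) blast
      show "((\<lambda>\<sigma>. 16 * (4 * \<epsilon> \<sigma>) * r / (1 - r\<^sup>2)) \<longlongrightarrow> 0) F" using lim by simp
    qed
  qed
qed

lemma part2:
  assumes s: "0 < \<sigma>"
  shows "(\<forall>\<^sub>F r in at_right 0. bounded_op (diff_mult \<sigma> r)) \<and>
         ((\<lambda>r. op_norm (diff_mult \<sigma> r)) \<longlongrightarrow> 0) (at_right 0)"
proof -
  define F where "F = at_right (0::real)"
  have ev: "\<forall>\<^sub>F r in F. 0 < r \<and> r < 1/6"
    unfolding F_def eventually_at_right_field by (intro exI[of _ "1/6"]) auto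
  have main: "\<forall>\<^sub>F r in F. bounded_op (diff_mult \<sigma> r) \<and> 0 \<le> op_norm (diff_mult \<sigma> r) \<and>
                op_norm (diff_mult \<sigma> r) \<le> 16 * 1 * r / (1 - r\<^sup>2)"
    using ev
  proof eventually_elim
    case (elim r)
    hence r: "0 < r" "r < 1" "r \<le> 1" by auto
    have bn: "\<bar>diff_mult \<sigma> r n\<bar> \<le> 16 * (1 * r powr (2 * (real n + 1/2)))" for n
    proof -
      have "\<bar>diff_mult \<sigma> r n\<bar> \<le> 16 * r powr (2 * (real n + 1/2))"
      proof (rule diff_bound)
        show "0 \<le> r powr (2 * (real n + 1/2))" by simp
        show "r powr (2 * (real n + 1/2)) \<le> 1/6" using rpow_le1[of r n] r elim by simp
        show "\<bar>rho \<sigma> r n\<bar> \<le> r powr (2 * (real n + 1/2)) * dIn n 1 / ((real n + 1/2) * Kn n 1)"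
          by (rule rho_bound2[OF s r(1) r(3)])
      qed
      thus ?thesis by simp
    qed
    have B: "\<bar>diff_mult \<sigma> r n\<bar> * (real n + 1) \<le> 16 * 1 * r / (1 - r\<^sup>2)" for n
      by (rule key_bound[OF r(1,2) _ bn]) simp
    have B0: "0 \<le> 16 * 1 * r / (1 - r\<^sup>2)"
      using r by (simp add: power_le_one)
    show ?case using opnorm_bound[OF B0 B] by blast
  qed
  have lim: "((\<lambda>r. 16 * 1 * r / (1 - r\<^sup>2)) \<longlongrightarrow> 16 * 1 * 0 / (1 - 0\<^sup>2)) F"
    unfolding F_def by (intro tendsto_intros) auto
  show ?thesis unfolding F_def[symmetric]
  proof
    show "\<forall>\<^sub>F r in F. bounded_op (diff_mult \<sigma> r)" using main by (rule eventually_mono) blast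
    show "((\<lambda>r. op_norm (diff_mult \<sigma> r)) \<longlongrightarrow> 0) F"
    proof (rule tendsto_sandwich[OF _ _ tendsto_const])
      show "\<forall>\<^sub>F r in F. 0 \<le> op_norm (diff_mult \<sigma> r)" using main by (rule eventually_mono) blast
      show "\<forall>\<^sub>F r in F. op_norm (diff_mult \<sigma> r) \<le> 16 * 1 * r / (1 - r\<^sup>2)"
        using main by (rule eventually_mono) blast
      show "((\<lambda>r. 16 * 1 * r / (1 - r\<^sup>2)) \<longlongrightarrow> 0) F" using lim by simp
    qed
  qed
qed

theorem theorem3p1:
  shows "(\<forall>r1. 0 < r1 \<and> r1 < 1 \<longrightarrow>
            (\<forall>\<^sub>F \<sigma>1 in at 1 within {0<..}. bounded_op (diff_mult \<sigma>1 r1)) \<and>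
            ((\<lambda>\<sigma>1. op_norm (diff_mult \<sigma>1 r1)) \<longlongrightarrow> 0) (at 1 within {0<..}))
       \<and> (\<forall>\<sigma>1. 0 < \<sigma>1 \<longrightarrow>
            (\<forall>\<^sub>F r1 in at_right 0. bounded_op (diff_mult \<sigma>1 r1)) \<and>
            ((\<lambda>r1. op_norm (diff_mult \<sigma>1 r1)) \<longlongrightarrow> 0) (at_right 0))"
  using part1 part2 by blast


end
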